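(* Fix $h\in\{2,\dots,H\}$. Let $\hat f=(\hat w,\hat\phi^F_{h-1},\hat\phi^B_h)$, i.e. $\hat f(x,a,x')=\hat w(\hat\phi^F_{h-1}(x),a,\hat\phi^B_h(x'))$, be the empirical square-loss risk minimizer over $\mathcal{F}_N$ on $n$ i.i.d. samples from $D$, and suppose $\mathbb{E}_D[(\hat f(x,a,x')-f^\star(x,a,x'))^2]\le\Delta_{reg}$ where $\Delta_{reg}=\frac{16(\ln|\Phi_N|+N^2|\mathcal{A}|\ln(n)+\ln(2/\delta))}{n}$. Then for each $i\in[N]$, $$\mathbb{E}_{D_{coup}}\big[1\{\hat\phi^B_h(x_1')=i=\hat\phi^B_h(x_2')\}\,|V(x_1',x_2',x,a)|\big]\le8\sqrt{b_i\Delta_{reg}}.$$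
   Context: Block MDP: horizon $H$; finite latent states $\mathcal{S}=\sqcup_h\mathcal{S}_h$; countable observations $\mathcal{X}=\sqcup_h\mathcal{X}_h$; finite actions $\mathcal{A}$; transitions $T(\cdot\mid s,a)\in\Delta(\mathcal{S}_{h+1})$; emissions $q(\cdot\mid s)\in\Delta(\mathcal{X}_h)$ with disjoint supports, decoder $g^\star$; $T(x'\mid x,a)=q(x'\mid g^\star(x'))T(g^\star(x')\mid g^\star(x),a)$. $\Psi_{h-1}$ is a finite set of policies forming an $\alpha$-policy cover of $\mathcal{S}_{h-1}$ (so $\rho_h>0$ on reachable observations). $D$: draw two independent transitions $(x_j,a_j,x_j')$, each by rolling in to $x_j\in\mathcal{X}_{h-1}$ with a uniformly chosen policy of $\Psi_{h-1}$, $a_j\sim\mathrm{Unf}(\mathcal{A})$, $x_j'\sim T(\cdot\mid x_j,a_j)$; with probability $1/2$ output $(x_1,a_1,x_1',1)$, else $(x_1,a_1,x_2',0)$. $D(x,a)$ denotes the marginal of $(x_1,a_1)$ and $\rho_h$ the marginal of $x_1'$ on $\mathcal{X}_h$ (lifted to states by summing). $f^\star(x,a,x')=\frac{T(g^\star(x')\mid g^\star(x),a)}{T(g^\star(x')\mid g^\star(x),a)+\rho_h(g^\star(x'))}$. $D_{coup}$ is the distribution on $(x,a,x_1',x_2')$ with density $D(x,a)\rho_h(x_1')\rho_h(x_2')$. $V(x_1',x_2',x,a)=\frac{T(g^\star(x_1')\mid g^\star(x),a)}{\rho_h(g^\star(x_1'))}-\frac{T(g^\star(x_2')\mid g^\star(x),a)}{\rho_h(g^\star(x_2'))}$.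 $b_i=\mathbb{E}_{x'\sim\rho_h}[1\{\hat\phi^B_h(x')=i\}]$. $\Phi_N$ is a finite class of maps $\mathcal{X}\to[N]$; $\mathcal{W}_N$ all functions $[N]\times\mathcal{A}\times[N]\to[0,1]$; $\mathcal{F}_N=\{(x,a,x')\mapsto w(\phi^F(x),a,\phi^B(x'))\}$; $\delta\in(0,1)$. *)

theory Defs
  imports "HOL-Probability.Probability"
begin

text \<open>Latent states of type 's (finite), observations of type 'x (countable),
actions of type 'a (finite).  lvl s is the layer index of state s (layers 1..H),
mu0 the initial state distribution (on layer 1), Tr s a the latent transition T(. | s,a),
q s the emission distribution, g the decoder g*.  The observation layer X_h is
the set of x with lvl (g x) = h.\<close>

definition block_mdp ::
  "nat \<Rightarrow> ('s \<Rightarrow> nat) \<Rightarrow> 's pmf \<Rightarrow> ('s \<Rightarrow> 'a \<Rightarrow> 's pmf) \<Rightarrow> ('s \<Rightarrow> 'x pmf) \<Rightarrow> ('x \<Rightarrow> 's) \<Rightarrow> bool"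
where
  "block_mdp H lvl mu0 Tr q g \<longleftrightarrow>
     (\<forall>s. 1 \<le> lvl s \<and> lvl s \<le> H) \<and>
     (\<forall>s\<in>set_pmf mu0. lvl s = 1) \<and>
     (\<forall>s a. lvl s < H \<longrightarrow> (\<forall>s'\<in>set_pmf (Tr s a). lvl s' = lvl s + 1)) \<and>
     (\<forall>s. \<forall>x\<in>set_pmf (q s). g x = s)"

definition obsT ::
  "('s \<Rightarrow> 'a \<Rightarrow> 's pmf) \<Rightarrow> ('s \<Rightarrow> 'x pmf) \<Rightarrow> ('x \<Rightarrow> 's) \<Rightarrow> 'x \<Rightarrow> 'a \<Rightarrow> 'x pmf"
where
  "obsT Tr q g x a = bind_pmf (Tr (g x) a) q"

text \<open>Distribution of the observation x_k (k >= 1) when executing the (randomized)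
policy p from the start; index 0 is a junk copy of index 1.\<close>
primrec roll_in ::
  "'s pmf \<Rightarrow> ('s \<Rightarrow> 'a \<Rightarrow> 's pmf) \<Rightarrow> ('s \<Rightarrow> 'x pmf) \<Rightarrow> ('x \<Rightarrow> 's) \<Rightarrow> ('x \<Rightarrow> 'a pmf) \<Rightarrow> nat \<Rightarrow> 'x pmf"
where
  "roll_in mu0 Tr q g p 0 = bind_pmf mu0 q"
| "roll_in mu0 Tr q g p (Suc k) =
     (if k = 0 then bind_pmf mu0 q
      else bind_pmf (roll_in mu0 Tr q g p k) (\<lambda>x. bind_pmf (p x) (\<lambda>a. obsT Tr q g x a)))"

definition visit_prob ::
  "'s pmf \<Rightarrow> ('s \<Rightarrow> 'a \<Rightarrow> 's pmf) \<Rightarrow> ('s \<Rightarrow> 'x pmf) \<Rightarrow> ('x \<Rightarrow> 's) \<Rightarrow> ('x \<Rightarrow> 'a pmf) \<Rightarrow> nat \<Rightarrow> 's \<Rightarrow> real"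
where
  "visit_prob mu0 Tr q g p k s = measure_pmf.prob (roll_in mu0 Tr q g p k) {x. g x = s}"

definition policy_cover ::
  "('s \<Rightarrow> nat) \<Rightarrow> 's pmf \<Rightarrow> ('s \<Rightarrow> 'a \<Rightarrow> 's pmf) \<Rightarrow> ('s \<Rightarrow> 'x pmf) \<Rightarrow> ('x \<Rightarrow> 's)
   \<Rightarrow> real \<Rightarrow> ('x \<Rightarrow> 'a pmf) set \<Rightarrow> nat \<Rightarrow> bool"
where
  "policy_cover lvl mu0 Tr q g \<alpha> Psi k \<longleftrightarrow>
     (\<forall>s. lvl s = k \<longrightarrow>
        (\<exists>p\<in>Psi. visit_prob mu0 Tr q g p k s \<ge> \<alpha> * (SUP p'. visit_prob mu0 Tr q g p' k s)))"

definition D_xa ::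
  "'s pmf \<Rightarrow> ('s \<Rightarrow> 'a::finite \<Rightarrow> 's pmf) \<Rightarrow> ('s \<Rightarrow> 'x pmf) \<Rightarrow> ('x \<Rightarrow> 's) \<Rightarrow> ('x \<Rightarrow> 'a pmf) set \<Rightarrow> nat
   \<Rightarrow> ('x \<times> 'a) pmf"
where
  "D_xa mu0 Tr q g Psi h =
     bind_pmf (pmf_of_set Psi) (\<lambda>p.
     bind_pmf (roll_in mu0 Tr q g p (h - 1)) (\<lambda>x.
     bind_pmf (pmf_of_set UNIV) (\<lambda>a. return_pmf (x, a))))"

definition rho ::
  "'s pmf \<Rightarrow> ('s \<Rightarrow> 'a::finite \<Rightarrow> 's pmf) \<Rightarrow> ('s \<Rightarrow> 'x pmf) \<Rightarrow> ('x \<Rightarrow> 's) \<Rightarrow> ('x \<Rightarrow> 'a pmf) set \<Rightarrow> nat \<Rightarrow> 'x pmf"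
where
  "rho mu0 Tr q g Psi h = bind_pmf (D_xa mu0 Tr q g Psi h) (\<lambda>(x, a). obsT Tr q g x a)"

definition rho_s ::
  "'s pmf \<Rightarrow> ('s \<Rightarrow> 'a::finite \<Rightarrow> 's pmf) \<Rightarrow> ('s \<Rightarrow> 'x pmf) \<Rightarrow> ('x \<Rightarrow> 's) \<Rightarrow> ('x \<Rightarrow> 'a pmf) set \<Rightarrow> nat \<Rightarrow> 's \<Rightarrow> real"
where
  "rho_s mu0 Tr q g Psi h s = measure_pmf.prob (rho mu0 Tr q g Psi h) {x. g x = s}"

definition f_star ::
  "'s pmf \<Rightarrow> ('s \<Rightarrow> 'a::finite \<Rightarrow> 's pmf) \<Rightarrow> ('s \<Rightarrow> 'x pmf) \<Rightarrow> ('x \<Rightarrow> 's) \<Rightarrow> ('x \<Rightarrow> 'a pmf) set \<Rightarrow> nat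
   \<Rightarrow> 'x \<Rightarrow> 'a \<Rightarrow> 'x \<Rightarrow> real"
where
  "f_star mu0 Tr q g Psi h x a x' =
     pmf (Tr (g x) a) (g x') / (pmf (Tr (g x) a) (g x') + rho_s mu0 Tr q g Psi h (g x'))"

definition D_dist ::
  "'s pmf \<Rightarrow> ('s \<Rightarrow> 'a::finite \<Rightarrow> 's pmf) \<Rightarrow> ('s \<Rightarrow> 'x pmf) \<Rightarrow> ('x \<Rightarrow> 's) \<Rightarrow> ('x \<Rightarrow> 'a pmf) set \<Rightarrow> nat
   \<Rightarrow> ('x \<times> 'a \<times> 'x \<times> real) pmf"
where
  "D_dist mu0 Tr q g Psi h =
     bind_pmf (D_xa mu0 Tr q g Psi h) (\<lambda>(x1, a1).
     bind_pmf (obsT Tr q g x1 a1) (\<lambda>x1'.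
     bind_pmf (D_xa mu0 Tr q g Psi h) (\<lambda>(x2, a2).
     bind_pmf (obsT Tr q g x2 a2) (\<lambda>x2'.
     bind_pmf (bernoulli_pmf (1/2)) (\<lambda>c.
       return_pmf (if c then (x1, a1, x1', 1) else (x1, a1, x2', 0)))))))"

definition D_coup ::
  "'s pmf \<Rightarrow> ('s \<Rightarrow> 'a::finite \<Rightarrow> 's pmf) \<Rightarrow> ('s \<Rightarrow> 'x pmf) \<Rightarrow> ('x \<Rightarrow> 's) \<Rightarrow> ('x \<Rightarrow> 'a pmf) set \<Rightarrow> nat
   \<Rightarrow> ('x \<times> 'a \<times> 'x \<times> 'x) pmf"
where
  "D_coup mu0 Tr q g Psi h =
     bind_pmf (D_xa mu0 Tr q g Psi h) (\<lambda>(x, a).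
     bind_pmf (rho mu0 Tr q g Psi h) (\<lambda>x1'.
     bind_pmf (rho mu0 Tr q g Psi h) (\<lambda>x2'. return_pmf (x, a, x1', x2'))))"

definition V_fun ::
  "'s pmf \<Rightarrow> ('s \<Rightarrow> 'a::finite \<Rightarrow> 's pmf) \<Rightarrow> ('s \<Rightarrow> 'x pmf) \<Rightarrow> ('x \<Rightarrow> 's) \<Rightarrow> ('x \<Rightarrow> 'a pmf) set \<Rightarrow> nat
   \<Rightarrow> 'x \<Rightarrow> 'x \<Rightarrow> 'x \<Rightarrow> 'a \<Rightarrow> real"
where
  "V_fun mu0 Tr q g Psi h x1' x2' x a =
     pmf (Tr (g x) a) (g x1') / rho_s mu0 Tr q g Psi h (g x1')
   - pmf (Tr (g x) a) (g x2') / rho_s mu0 Tr q g Psi h (g x2')"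

definition W_N :: "nat \<Rightarrow> (nat \<Rightarrow> 'a \<Rightarrow> nat \<Rightarrow> real) set" where
  "W_N N = {w. \<forall>i\<in>{1..N}. \<forall>a. \<forall>j\<in>{1..N}. 0 \<le> w i a j \<and> w i a j \<le> 1}"

definition F_N :: "('x \<Rightarrow> nat) set \<Rightarrow> nat \<Rightarrow> ('x \<times> 'a \<times> 'x \<Rightarrow> real) set" where
  "F_N Phi N = {f. \<exists>phiF\<in>Phi. \<exists>phiB\<in>Phi. \<exists>w\<in>W_N N.
                   f = (\<lambda>(x, a, x'). w (phiF x) a (phiB x'))}"

end

theory Submission
  imports Defs
begin

lemma pmf_nn_add: "(\<integral>\<^sup>+x. f x + g x \<partial>measure_pmf M) = (\<integral>\<^sup>+x. f x \<partial>measure_pmf M) + (\<integral>\<^sup>+x. g x \<partial>measure_pmf M)"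
  by (rule nn_integral_add) auto
lemma pmf_nn_const[simp]: "(\<integral>\<^sup>+x. c \<partial>measure_pmf M) = c"
  by (simp add: measure_pmf.emeasure_space_1)
lemma pmf_nn_multc: "(\<integral>\<^sup>+x. f x * c \<partial>measure_pmf M) = (\<integral>\<^sup>+x. f x \<partial>measure_pmf M) * c"
  by (rule nn_integral_multc) auto
lemma pmf_nn_cmult: "(\<integral>\<^sup>+x. c * f x \<partial>measure_pmf M) = c * (\<integral>\<^sup>+x. f x \<partial>measure_pmf M)"
  by (rule nn_integral_cmult) auto
lemma pmf_nn_mono: "(\<And>x. x \<in> set_pmf M \<Longrightarrow> f x \<le> g x) \<Longrightarrow> (\<integral>\<^sup>+x. f x \<partial>measure_pmf M) \<le> (\<integral>\<^sup>+x. g x \<partial>measure_pmf M)"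
  by (rule nn_integral_mono_AE) (simp add: AE_measure_pmf_iff)
lemma pmf_nn_cong: "(\<And>x. x \<in> set_pmf M \<Longrightarrow> f x = g x) \<Longrightarrow> (\<integral>\<^sup>+x. f x \<partial>measure_pmf M) = (\<integral>\<^sup>+x. g x \<partial>measure_pmf M)"
  by (rule nn_integral_cong_AE) (simp add: AE_measure_pmf_iff)
lemma pmf_nn_ind: "(\<integral>\<^sup>+x. ennreal (indicator S x) \<partial>measure_pmf M) = ennreal (measure_pmf.prob M S)"
  by (simp add: ennreal_indicator measure_pmf.emeasure_eq_measure)

lemma e2mult: "0 \<le> a \<Longrightarrow> 0 \<le> k \<Longrightarrow> 2 * (ennreal a * ennreal k) = ennreal (2 * (a * k))"
  by (simp add: ennreal_mult)

lemma amgm_aux: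
  fixes i e p k l :: real
  assumes "i = 0 \<or> i = 1" "0 \<le> p" "0 < l"
  shows "2 * (i * e * (1 + p) * k) \<le> l * e^2 + l * e^2 * p + k^2 / l * (i * (1 + p))"
proof -
  have "0 \<le> (1 + p) * (l * e - i * k)^2 / l" using assms by simp
  also have "(1 + p) * (l * e - i * k)^2 / l = l * e^2 + l * e^2 * p + k^2 / l * (i * (1 + p)) - 2 * (i * e * (1 + p) * k)"
    using assms by (auto simp: field_simps power2_eq_square)
  finally show ?thesis by simp
qed

lemma core:
  fixes Dx :: "('x \<times> 'a) pmf" and R :: "'x pmf" and Ob :: "'x \<times> 'a \<Rightarrow> 'x pmf"
    and P E :: "'x \<times> 'a \<Rightarrow> 'x \<Rightarrow> real" and W :: "'x \<times> 'a \<Rightarrow> 'x \<Rightarrow> 'x \<Rightarrow> real" and S :: "'x set"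
    and l \<Delta> :: real
  assumes P0: "\<And>z x. 0 \<le> P z x" and E0: "\<And>z x. 0 \<le> E z x"
    and CM: "\<And>z F. z \<in> set_pmf Dx \<Longrightarrow> (\<And>x. 0 \<le> F x) \<Longrightarrow>
              (\<integral>\<^sup>+x. ennreal (F x * P z x) \<partial>R) = (\<integral>\<^sup>+x. ennreal (F x) \<partial>Ob z)"
    and Rb: "\<And>f. (\<integral>\<^sup>+x. f x \<partial>R) = (\<integral>\<^sup>+z. (\<integral>\<^sup>+x. f x \<partial>Ob z) \<partial>Dx)"
    and err: "(\<integral>\<^sup>+z. (\<integral>\<^sup>+x. ennreal ((E z x)^2) \<partial>Ob z) + (\<integral>\<^sup>+x. ennreal ((E z x)^2) \<partial>R) \<partial>Dx) \<le> ennreal (2*\<Delta>)"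
    and Wb: "\<And>z x1 x2. z \<in> set_pmf Dx \<Longrightarrow> x1 \<in> set_pmf R \<Longrightarrow> x2 \<in> set_pmf R \<Longrightarrow>
              W z x1 x2 \<le> indicator S x1 * indicator S x2 * (E z x1 + E z x2) * (1 + P z x1) * (1 + P z x2)"
    and lam: "0 < l" and D0: "0 \<le> \<Delta>"
  shows "(\<integral>\<^sup>+z. (\<integral>\<^sup>+x1. (\<integral>\<^sup>+x2. ennreal (W z x1 x2) \<partial>R) \<partial>R) \<partial>Dx)
          \<le> ennreal (2*l*\<Delta> + 8 * measure_pmf.prob R S / l)"
proof -
  define b where "b = measure_pmf.prob R S"
  define T where "T z = measure_pmf.prob (Ob z) S" for z
  define Kr where "Kr z = b + T z" for z
  define K where "K z = (\<integral>\<^sup>+x. ennreal (indicator S x * (1 + P z x)) \<partial>R)" for z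
  define G where "G z = (\<integral>\<^sup>+x. ennreal (indicator S x * E z x * (1 + P z x)) \<partial>R)" for z
  have ind01: "indicator S x = (0::real) \<or> indicator S x = (1::real)" for x by (simp add: indicator_def)
  have K_eq: "K z = ennreal (Kr z)" if z: "z \<in> set_pmf Dx" for z
  proof -
    have "K z = (\<integral>\<^sup>+x. ennreal (indicator S x) + ennreal (indicator S x * P z x) \<partial>R)"
      unfolding K_def by (intro nn_integral_cong) (simp add: P0 ennreal_plus[symmetric] algebra_simps del: ennreal_plus)
    also have "\<dots> = ennreal b + (\<integral>\<^sup>+x. ennreal (indicator S x) \<partial>Ob z)"
      by (simp add: pmf_nn_add pmf_nn_ind b_def CM[OF z])
    also have "\<dots> = ennreal (Kr z)" by (simp add: pmf_nn_ind Kr_def T_def b_def ennreal_plus)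
    finally show ?thesis .
  qed
  have b0: "0 \<le> b" and b1: "b \<le> 1" by (simp_all add: b_def)
  have Kr0: "0 \<le> Kr z" and Kr2: "Kr z \<le> 2" for z
    using b0 b1 measure_pmf.prob_le_1[of "Ob z" S] measure_nonneg[of "Ob z" S]
    unfolding Kr_def T_def by linarith+
  have step1: "(\<integral>\<^sup>+z. (\<integral>\<^sup>+x1. (\<integral>\<^sup>+x2. ennreal (W z x1 x2) \<partial>R) \<partial>R) \<partial>Dx)
     \<le> (\<integral>\<^sup>+z. (\<integral>\<^sup>+x1. (\<integral>\<^sup>+x2.
            ennreal (indicator S x1 * E z x1 * (1 + P z x1)) * ennreal (indicator S x2 * (1 + P z x2))
          + ennreal (indicator S x1 * (1 + P z x1)) * ennreal (indicator S x2 * E z x2 * (1 + P z x2)) \<partial>R) \<partial>R) \<partial>Dx)"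
  proof (intro pmf_nn_mono)
    fix z x1 x2 assume z: "z \<in> set_pmf Dx" and x1: "x1 \<in> set_pmf R" and x2: "x2 \<in> set_pmf R"
    have "W z x1 x2 \<le> indicator S x1 * E z x1 * (1 + P z x1) * (indicator S x2 * (1 + P z x2))
          + indicator S x1 * (1 + P z x1) * (indicator S x2 * E z x2 * (1 + P z x2))"
      using Wb[OF z x1 x2] by (simp add: algebra_simps)
    then show "ennreal (W z x1 x2) \<le> ennreal (indicator S x1 * E z x1 * (1 + P z x1)) * ennreal (indicator S x2 * (1 + P z x2))
          + ennreal (indicator S x1 * (1 + P z x1)) * ennreal (indicator S x2 * E z x2 * (1 + P z x2))"
      by (simp add: ennreal_mult[symmetric] ennreal_plus[symmetric] P0 E0 del: ennreal_plus)
  qed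
  also have "\<dots> = (\<integral>\<^sup>+z. 2 * (G z * K z) \<partial>Dx)"
    by (simp add: pmf_nn_add pmf_nn_cmult pmf_nn_multc G_def K_def mult_2 mult.commute)
  also have "\<dots> \<le> (\<integral>\<^sup>+z. ennreal l * ((\<integral>\<^sup>+x. ennreal ((E z x)^2) \<partial>Ob z) + (\<integral>\<^sup>+x. ennreal ((E z x)^2) \<partial>R))
                      + ennreal (4 / l) * ennreal (Kr z) \<partial>Dx)"
  proof (intro pmf_nn_mono)
    fix z assume z: "z \<in> set_pmf Dx"
    have "2 * (G z * K z) = (\<integral>\<^sup>+x. ennreal (2 * (indicator S x * E z x * (1 + P z x) * Kr z)) \<partial>R)"
      unfolding K_eq[OF z] G_def pmf_nn_multc[symmetric] pmf_nn_cmult[symmetric]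
      by (intro nn_integral_cong e2mult) (simp_all add: P0 E0 Kr0)
    also have "\<dots> \<le> (\<integral>\<^sup>+x. ennreal (l * (E z x)^2) + ennreal (l * (E z x)^2 * P z x)
                     + ennreal ((Kr z)^2 / l) * ennreal (indicator S x * (1 + P z x)) \<partial>R)"
    proof (intro pmf_nn_mono)
      fix x
      have "2 * (indicator S x * E z x * (1 + P z x) * Kr z) \<le> l * (E z x)^2 + l * (E z x)^2 * P z x + (Kr z)^2 / l * (indicator S x * (1 + P z x))"
        by (rule amgm_aux[OF ind01 P0 lam])
      then show "ennreal (2 * (indicator S x * E z x * (1 + P z x) * Kr z)) \<le> ennreal (l * (E z x)^2) + ennreal (l * (E z x)^2 * P z x)
                     + ennreal ((Kr z)^2 / l) * ennreal (indicator S x * (1 + P z x))"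
        using lam by (simp add: ennreal_mult[symmetric] ennreal_plus[symmetric] P0 del: ennreal_plus)
    qed
    also have "\<dots> = ennreal l * (\<integral>\<^sup>+x. ennreal ((E z x)^2) \<partial>R) + ennreal l * (\<integral>\<^sup>+x. ennreal ((E z x)^2) \<partial>Ob z)
                     + ennreal ((Kr z)^2 / l) * ennreal (Kr z)"
    proof -
      have l0: "0 \<le> l" using lam by simp
      have m1: "(\<integral>\<^sup>+x. ennreal (l * (E z x)^2) \<partial>M) = ennreal l * (\<integral>\<^sup>+x. ennreal ((E z x)^2) \<partial>M)" for M :: "'x pmf"
        unfolding pmf_nn_cmult[symmetric] by (intro nn_integral_cong) (simp add: ennreal_mult l0)
      have m2: "(\<integral>\<^sup>+x. ennreal (l * (E z x)^2 * P z x) \<partial>R) = ennreal l * (\<integral>\<^sup>+x. ennreal ((E z x)^2) \<partial>Ob z)"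
        by (subst CM[OF z]) (simp_all add: l0 m1)
      show ?thesis
        unfolding pmf_nn_add pmf_nn_cmult m1 m2
        using K_eq[OF z] unfolding K_def by simp
    qed
    also have "\<dots> \<le> ennreal l * ((\<integral>\<^sup>+x. ennreal ((E z x)^2) \<partial>Ob z) + (\<integral>\<^sup>+x. ennreal ((E z x)^2) \<partial>R))
                      + ennreal (4 / l) * ennreal (Kr z)"
    proof -
      have "(Kr z)^2 / l * Kr z \<le> 4 / l * Kr z"
      proof -
        have "(Kr z)^2 \<le> 2^2" using power_mono[OF Kr2[of z] Kr0[of z], of 2] .
        then have "(Kr z)^2 \<le> 4" by simp
        then show ?thesis using lam Kr0 by (intro mult_right_mono divide_right_mono) auto
      qed
      then have le: "ennreal ((Kr z)^2 / l * Kr z) \<le> ennreal (4 / l * Kr z)"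
        by (rule ennreal_leI)
      have e1: "ennreal ((Kr z)^2 / l) * ennreal (Kr z) = ennreal ((Kr z)^2 / l * Kr z)"
        using lam Kr0 by (intro ennreal_mult[symmetric]) auto
      have e2: "ennreal (4 / l) * ennreal (Kr z) = ennreal (4 / l * Kr z)"
        using lam Kr0 by (intro ennreal_mult[symmetric]) auto
      have e3: "ennreal l * (\<integral>\<^sup>+x. ennreal ((E z x)^2) \<partial>R) + ennreal l * (\<integral>\<^sup>+x. ennreal ((E z x)^2) \<partial>Ob z)
             = ennreal l * ((\<integral>\<^sup>+x. ennreal ((E z x)^2) \<partial>Ob z) + (\<integral>\<^sup>+x. ennreal ((E z x)^2) \<partial>R))"
        by (simp only: distrib_left add.commute)
      show ?thesis unfolding e1 e2 e3 using le by (rule add_left_mono)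
    qed
    finally show "2 * (G z * K z) \<le> ennreal l * ((\<integral>\<^sup>+x. ennreal ((E z x)^2) \<partial>Ob z) + (\<integral>\<^sup>+x. ennreal ((E z x)^2) \<partial>R))
                      + ennreal (4 / l) * ennreal (Kr z)" .
  qed
  also have "\<dots> = ennreal l * (\<integral>\<^sup>+z. (\<integral>\<^sup>+x. ennreal ((E z x)^2) \<partial>Ob z) + (\<integral>\<^sup>+x. ennreal ((E z x)^2) \<partial>R) \<partial>Dx)
                 + ennreal (4 / l) * (\<integral>\<^sup>+z. ennreal (Kr z) \<partial>Dx)"
    by (simp add: pmf_nn_add pmf_nn_cmult)
  also have "(\<integral>\<^sup>+z. ennreal (Kr z) \<partial>Dx) = ennreal (2 * b)"
  proof -
    have "(\<integral>\<^sup>+z. ennreal (Kr z) \<partial>Dx) = (\<integral>\<^sup>+z. ennreal b + (\<integral>\<^sup>+x. ennreal (indicator S x) \<partial>Ob z) \<partial>Dx)"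
      by (intro nn_integral_cong) (simp add: Kr_def T_def pmf_nn_ind ennreal_plus b0)
    also have "\<dots> = ennreal b + ennreal b"
    proof -
      have "(\<integral>\<^sup>+z. (\<integral>\<^sup>+x. ennreal (indicator S x) \<partial>Ob z) \<partial>Dx) = (\<integral>\<^sup>+x. ennreal (indicator S x) \<partial>R)"
        by (rule Rb[symmetric])
      then show ?thesis unfolding pmf_nn_add pmf_nn_const by (simp add: pmf_nn_ind b_def)
    qed
    finally show ?thesis using b0 by (simp add: ennreal_plus[symmetric] del: ennreal_plus)
  qed
  also have "ennreal l * (\<integral>\<^sup>+z. (\<integral>\<^sup>+x. ennreal ((E z x)^2) \<partial>Ob z) + (\<integral>\<^sup>+x. ennreal ((E z x)^2) \<partial>R) \<partial>Dx)
                 + ennreal (4 / l) * ennreal (2 * b) \<le> ennreal l * ennreal (2 * \<Delta>) + ennreal (4 / l) * ennreal (2 * b)"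
    by (intro add_mono mult_left_mono err) auto
  also have "\<dots> = ennreal (2*l*\<Delta> + 8 * measure_pmf.prob R S / l)"
    using lam D0 b0 by (simp add: ennreal_mult[symmetric] ennreal_plus[symmetric] b_def del: ennreal_plus)
  finally show ?thesis .
qed
lemma pmf_bind_dec:
  assumes "\<forall>s. \<forall>x\<in>set_pmf (q s). g x = s"
  shows "pmf (bind_pmf M q) x' = pmf M (g x') * pmf (q (g x')) x'"
proof -
  have "pmf (bind_pmf M q) x' = (\<integral>s. pmf (q s) x' \<partial>measure_pmf M)" by (rule pmf_bind)
  also have "\<dots> = (\<Sum>s\<in>{g x'}. pmf (q s) x' * pmf M s)"
    apply (rule integral_measure_pmf_real)
    using assms by (auto simp: set_pmf_eq)
  finally show ?thesis by simp
qed

lemma map_dec: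
  assumes "\<forall>s. \<forall>x\<in>set_pmf (q s). g x = s"
  shows "map_pmf g (bind_pmf M q) = M"
proof -
  have "map_pmf g (q s) = return_pmf s" for s using assms by (simp add: map_pmf_eq_return_pmf_iff)
  then show ?thesis by (simp add: map_bind_pmf bind_return_pmf')
qed

lemma rho_pmf:
  assumes dec: "\<forall>s. \<forall>x\<in>set_pmf (q s). g x = s"
  shows "pmf (rho mu0 Tr q g Psi h) x' = rho_s mu0 Tr q g Psi h (g x') * pmf (q (g x')) x'"
proof -
  define Ms where "Ms = bind_pmf (D_xa mu0 Tr q g Psi h) (\<lambda>z. Tr (g (fst z)) (snd z))"
  have R: "rho mu0 Tr q g Psi h = bind_pmf Ms q"
    unfolding rho_def Ms_def obsT_def by (simp add: bind_assoc_pmf case_prod_unfold)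
  have "rho_s mu0 Tr q g Psi h s = pmf Ms s" for s
  proof -
    have "rho_s mu0 Tr q g Psi h s = pmf (map_pmf g (rho mu0 Tr q g Psi h)) s"
      unfolding rho_s_def pmf_map by (simp add: vimage_def)
    also have "\<dots> = pmf Ms s" unfolding R map_dec[OF dec] ..
    finally show ?thesis .
  qed
  then show ?thesis unfolding R pmf_bind_dec[OF dec] by simp
qed

lemma obsT_pmf:
  assumes dec: "\<forall>s. \<forall>x\<in>set_pmf (q s). g x = s"
  shows "pmf (obsT Tr q g x a) x' = pmf (Tr (g x) a) (g x') * pmf (q (g x')) x'"
  unfolding obsT_def by (rule pmf_bind_dec[OF dec])

lemma obsT_supp:
  "z \<in> set_pmf (D_xa mu0 Tr q g Psi h) \<Longrightarrow> set_pmf (obsT Tr q g (fst z) (snd z)) \<subseteq> set_pmf (rho mu0 Tr q g Psi h)"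
  unfolding rho_def by (auto simp: case_prod_unfold)

lemma CM_lemma:
  assumes dec: "\<forall>s. \<forall>x\<in>set_pmf (q s). g x = s"
    and z: "z \<in> set_pmf (D_xa mu0 Tr q g Psi h)"
    and F0: "\<And>x. 0 \<le> F x"
  shows "(\<integral>\<^sup>+x. ennreal (F x * (pmf (Tr (g (fst z)) (snd z)) (g x) / rho_s mu0 Tr q g Psi h (g x))) \<partial>rho mu0 Tr q g Psi h)
       = (\<integral>\<^sup>+x. ennreal (F x) \<partial>obsT Tr q g (fst z) (snd z))"
proof -
  let ?R = "rho mu0 Tr q g Psi h" and ?O = "obsT Tr q g (fst z) (snd z)"
  let ?rs = "rho_s mu0 Tr q g Psi h"
  have "ennreal (pmf ?R x) * ennreal (F x * (pmf (Tr (g (fst z)) (snd z)) (g x) / ?rs (g x)))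
        = ennreal (pmf ?O x) * ennreal (F x)" for x
  proof (cases "pmf ?R x = 0")
    case True
    then have "x \<notin> set_pmf ?O" using obsT_supp[OF z] by (auto simp: set_pmf_eq)
    then have "pmf ?O x = 0" by (simp add: set_pmf_eq)
    then show ?thesis using True by simp
  next
    case False
    have rs0: "?rs (g x) \<noteq> 0" using False rho_pmf[OF dec, of mu0 Tr Psi h x] by auto
    have "pmf ?R x * (F x * (pmf (Tr (g (fst z)) (snd z)) (g x) / ?rs (g x))) = pmf ?O x * F x"
      using rs0 by (simp add: rho_pmf[OF dec] obsT_pmf[OF dec])
    then show ?thesis
      by (simp add: ennreal_mult[symmetric] F0 rho_s_def del: ennreal_mult')
  qed
  then show ?thesis by (simp add: nn_integral_measure_pmf)
qed

lemma ring1: "((a::real) - b) * ((1 + c) * (1 + d)) = (a * (1 + c)) * (1 + d) - (b * (1 + d)) * (1 + c)"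
  by algebra
lemma ring2: "(c::real) * (1 + d) - d * (1 + c) = c - d"
  by algebra

lemma valg:
  fixes t1 t2 r1 r2 c :: real
  assumes "0 < r1" "0 < r2" "0 \<le> t1" "0 \<le> t2"
  shows "\<bar>t1 / r1 - t2 / r2\<bar> \<le> (\<bar>c - t1 / (t1 + r1)\<bar> + \<bar>c - t2 / (t2 + r2)\<bar>) * (1 + t1 / r1) * (1 + t2 / r2)"
proof -
  have eq: "t1 / r1 - t2 / r2 = (t1 / (t1 + r1) - t2 / (t2 + r2)) * ((1 + t1 / r1) * (1 + t2 / r2))"
  proof -
    have "t1 + r1 \<noteq> 0" "t2 + r2 \<noteq> 0" using assms by auto
    have "1 + t1 / r1 = (t1 + r1) / r1" "1 + t2 / r2 = (t2 + r2) / r2" using assms by (simp_all add: field_simps)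
    then have h1: "t1 / (t1 + r1) * (1 + t1 / r1) = t1 / r1" and h2: "t2 / (t2 + r2) * (1 + t2 / r2) = t2 / r2"
      using \<open>t1 + r1 \<noteq> 0\<close> \<open>t2 + r2 \<noteq> 0\<close> by simp_all
    have "(t1 / (t1 + r1) - t2 / (t2 + r2)) * ((1 + t1 / r1) * (1 + t2 / r2))
        = (t1 / (t1 + r1) * (1 + t1 / r1)) * (1 + t2 / r2) - (t2 / (t2 + r2) * (1 + t2 / r2)) * (1 + t1 / r1)"
      by (rule ring1)
    also have "\<dots> = t1 / r1 - t2 / r2" unfolding h1 h2 by (rule ring2)
    finally show ?thesis by simp
  qed
  have pos: "0 \<le> (1 + t1 / r1) * (1 + t2 / r2)" using assms by simp
  have "\<bar>t1 / (t1 + r1) - t2 / (t2 + r2)\<bar> \<le> \<bar>c - t1 / (t1 + r1)\<bar> + \<bar>c - t2 / (t2 + r2)\<bar>" by linarith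
  then have "\<bar>t1 / r1 - t2 / r2\<bar> \<le> (\<bar>c - t1 / (t1 + r1)\<bar> + \<bar>c - t2 / (t2 + r2)\<bar>) * ((1 + t1 / r1) * (1 + t2 / r2))"
    unfolding eq abs_mult_pos[OF pos, symmetric] using pos by (intro mult_right_mono) auto
  then show ?thesis by (simp add: mult.assoc)
qed

lemma final_real:
  fixes X b \<Delta> :: real
  assumes H: "\<And>l. 0 < l \<Longrightarrow> X \<le> 2 * l * \<Delta> + 8 * b / l" and b: "0 \<le> b" and D: "0 \<le> \<Delta>"
  shows "X \<le> 8 * sqrt (b * \<Delta>)"
proof (cases "0 < b \<and> 0 < \<Delta>")
  case True
  define s where "s = sqrt b"
  define d where "d = sqrt \<Delta>"
  have s: "0 < s" "s^2 = b" using True by (auto simp: s_def)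
  have d: "0 < d" "d^2 = \<Delta>" using True by (auto simp: d_def)
  have "X \<le> 2 * (2 * s / d) * \<Delta> + 8 * b / (2 * s / d)" using H[of "2 * s / d"] s d by simp
  also have "\<dots> = 8 * (s * d)"
  proof -
    have "2 * (2 * s / d) * (d^2) + 8 * (s^2) / (2 * s / d) = 8 * (s * d)"
      using s(1) d(1) by (simp add: field_simps power2_eq_square)
    then show ?thesis using s(2) d(2) by simp
  qed
  also have "s * d = sqrt (b * \<Delta>)" by (simp add: s_def d_def real_sqrt_mult)
  finally show ?thesis .
next
  case False
  then have bD: "b * \<Delta> = 0" using b D by auto
  have "X \<le> 0"
  proof (rule ccontr)
    assume "\<not> X \<le> 0"
    then have X: "0 < X" by simp
    show False
    proof (cases "b = 0")
      case True
      have "X \<le> 2 * (X / (4 * \<Delta> + 1)) * \<Delta>" using H[of "X / (4 * \<Delta> + 1)"] X D True by simp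
      also have "\<dots> < X" using X D by (simp add: field_simps) (intro add_pos_nonneg mult_nonneg_nonneg, auto)
      finally show False by simp
    next
      case False
      then have "\<Delta> = 0" using bD by simp
      have "X \<le> 8 * b / ((16 * b + 1) / X)" using H[of "(16 * b + 1) / X"] X b \<open>\<Delta> = 0\<close> by simp
      also have "\<dots> < X" using X b by (simp add: field_simps) (intro add_pos_nonneg mult_nonneg_nonneg, auto)
      finally show False by simp
    qed
  qed
  moreover have "sqrt (b * \<Delta>) = 0" using bD by simp
  ultimately show ?thesis by linarith
qed
lemma half_sum_le:
  fixes x y :: ennreal
  assumes "x / 2 + y / 2 \<le> ennreal d" "0 \<le> d"
  shows "x + y \<le> ennreal (2 * d)"
proof -
  have "x / 2 + y / 2 = (x + y) * inverse 2" by (simp add: divide_ennreal_def distrib_right)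
  moreover have "(x + y) * inverse 2 * 2 = x + y"
  proof -
    have "inverse (2::ennreal) * 2 = ennreal (1/2) * ennreal 2" by simp
    also have "\<dots> = ennreal (1/2 * 2)" by (rule ennreal_mult[symmetric]) auto
    also have "\<dots> = 1" by simp
    finally show ?thesis by (simp add: mult.assoc)
  qed
  ultimately have "x + y = (x / 2 + y / 2) * 2" by simp
  also have "\<dots> \<le> ennreal d * 2" using assms(1) by (rule mult_right_mono) simp
  also have "\<dots> = ennreal (2 * d)" using assms(2) by (simp add: ennreal_mult mult.commute)
  finally show ?thesis .
qed

lemma frac01: "0 \<le> (t::real) \<Longrightarrow> 0 \<le> r \<Longrightarrow> 0 \<le> t / (t + r) \<and> t / (t + r) \<le> 1"
  by (cases "t + r = 0") (auto simp: divide_le_eq_1)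

lemma D_dist_marg:
  fixes F :: "'x \<Rightarrow> 'a::finite \<Rightarrow> 'x \<Rightarrow> ennreal"
  shows "(\<integral>\<^sup>+z. F (fst z) (fst (snd z)) (fst (snd (snd z))) \<partial>D_dist mu0 Tr q g Psi h)
     = (\<integral>\<^sup>+z. (\<integral>\<^sup>+x'. F (fst z) (snd z) x' \<partial>obsT Tr q g (fst z) (snd z)) \<partial>D_xa mu0 Tr q g Psi h) / 2
     + (\<integral>\<^sup>+z. (\<integral>\<^sup>+x'. F (fst z) (snd z) x' \<partial>rho mu0 Tr q g Psi h) \<partial>D_xa mu0 Tr q g Psi h) / 2"
  unfolding D_dist_def
  apply (simp add: case_prod_unfold pmf_nn_add pmf_nn_multc)
  apply (simp add: rho_def case_prod_unfold divide_ennreal_def)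
  done

theorem mainTheorem13:
  fixes H h N n i :: nat
    and lvl :: "'s::finite \<Rightarrow> nat"
    and mu0 :: "'s pmf"
    and Tr :: "'s \<Rightarrow> 'a::finite \<Rightarrow> 's pmf"
    and q :: "'s \<Rightarrow> 'x::countable pmf"
    and g :: "'x \<Rightarrow> 's"
    and Psi :: "('x \<Rightarrow> 'a pmf) set"
    and \<alpha> \<delta> \<Delta> :: real
    and Phi :: "('x \<Rightarrow> nat) set"
    and samples :: "('x \<times> 'a \<times> 'x \<times> real) list"
    and w_hat :: "nat \<Rightarrow> 'a \<Rightarrow> nat \<Rightarrow> real"
    and phiF phiB :: "'x \<Rightarrow> nat"
  assumes mdp: "block_mdp H lvl mu0 Tr q g"
    and h: "2 \<le> h" "h \<le> H"
    and Psi: "finite Psi" "Psi \<noteq> {}" "0 < \<alpha>" "policy_cover lvl mu0 Tr q g \<alpha> Psi (h - 1)"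
    and \<delta>: "0 < \<delta>" "\<delta> < 1"
    and Phi: "finite Phi" "\<forall>\<phi>\<in>Phi. \<forall>x. \<phi> x \<in> {1..N}"
    and samples: "0 < n" "length samples = n" "set samples \<subseteq> set_pmf (D_dist mu0 Tr q g Psi h)"
    and fhat: "phiF \<in> Phi" "phiB \<in> Phi" "w_hat \<in> W_N N"
    and erm: "\<forall>f\<in>F_N Phi N.
                (\<Sum>(x, a, x', y)\<leftarrow>samples. (w_hat (phiF x) a (phiB x') - y)^2)
              \<le> (\<Sum>(x, a, x', y)\<leftarrow>samples. (f (x, a, x') - y)^2)"
    and Delta: "\<Delta> = 16 * (ln (real (card Phi)) + real N ^ 2 * real (card (UNIV :: 'a set)) * ln (real n)
                           + ln (2 / \<delta>)) / real n"
    and err: "measure_pmf.expectation (D_dist mu0 Tr q g Psi h)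
                (\<lambda>(x, a, x', y). (w_hat (phiF x) a (phiB x') - f_star mu0 Tr q g Psi h x a x')^2) \<le> \<Delta>"
    and i: "i \<in> {1..N}"
  shows "measure_pmf.expectation (D_coup mu0 Tr q g Psi h)
           (\<lambda>(x, a, x1', x2'). (if phiB x1' = i \<and> phiB x2' = i then 1 else 0)
                               * \<bar>V_fun mu0 Tr q g Psi h x1' x2' x a\<bar>)
         \<le> 8 * sqrt (measure_pmf.prob (rho mu0 Tr q g Psi h) {x'. phiB x' = i} * \<Delta>)"
proof -
  have dec: "\<forall>s. \<forall>x\<in>set_pmf (q s). g x = s" using mdp unfolding block_mdp_def by blast
  let ?Dx = "D_xa mu0 Tr q g Psi h" and ?R = "rho mu0 Tr q g Psi h" and ?rs = "rho_s mu0 Tr q g Psi h"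
  let ?Ob = "\<lambda>z. obsT Tr q g (fst z) (snd z)"
  define P where "P = (\<lambda>z x'. pmf (Tr (g (fst z)) (snd z)) (g x') / ?rs (g x'))"
  define E where "E = (\<lambda>z x'. \<bar>w_hat (phiF (fst z)) (snd z) (phiB x') - f_star mu0 Tr q g Psi h (fst z) (snd z) x'\<bar>)"
  define W where "W = (\<lambda>z x1 x2. (if phiB x1 = i \<and> phiB x2 = i then 1 else 0) * \<bar>V_fun mu0 Tr q g Psi h x1 x2 (fst z) (snd z)\<bar>)"
  define S where "S = {x'. phiB x' = i}"
  define errf where "errf = (\<lambda>(x, a, x', y::real). (w_hat (phiF x) a (phiB x') - f_star mu0 Tr q g Psi h x a x')^2)"
  have rs0: "0 \<le> ?rs s" for s by (simp add: rho_s_def)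
  have P0: "0 \<le> P z x" for z x unfolding P_def using rs0 by simp
  have E0: "0 \<le> E z x" for z x unfolding E_def by simp
  have CM: "(\<integral>\<^sup>+x. ennreal (F x * P z x) \<partial>?R) = (\<integral>\<^sup>+x. ennreal (F x) \<partial>?Ob z)"
    if "z \<in> set_pmf ?Dx" "\<And>x. 0 \<le> F x" for z F
    unfolding P_def by (rule CM_lemma[OF dec that])
  have Rb: "(\<integral>\<^sup>+x. f x \<partial>?R) = (\<integral>\<^sup>+z. (\<integral>\<^sup>+x. f x \<partial>?Ob z) \<partial>?Dx)" for f
    by (simp add: rho_def case_prod_unfold)
  have w01: "0 \<le> w_hat (phiF x) a (phiB x') \<and> w_hat (phiF x) a (phiB x') \<le> 1" for x a x'
    using fhat Phi(2) unfolding W_N_def by blast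
  have fs01: "0 \<le> f_star mu0 Tr q g Psi h x a x' \<and> f_star mu0 Tr q g Psi h x a x' \<le> 1" for x a x'
  proof -
    let ?t = "pmf (Tr (g x) a) (g x')" and ?r = "?rs (g x')"
    have "0 \<le> ?t" "0 \<le> ?r" using rs0 by auto
    show ?thesis unfolding f_star_def
      by (rule frac01) (use rs0 in auto)
  qed
  have E1: "E z x \<le> 1" for z x using w01 fs01 unfolding E_def by (simp add: abs_le_iff) (smt (verit))
  have errf_eq: "errf z = (E (fst z, fst (snd z)) (fst (snd (snd z))))^2" for z
    unfolding errf_def E_def by (simp add: case_prod_unfold)
  have errf01: "0 \<le> errf z \<and> errf z \<le> 1" for z
  proof -
    have "0 \<le> E (fst z, fst (snd z)) (fst (snd (snd z)))" "E (fst z, fst (snd z)) (fst (snd (snd z))) \<le> 1"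
      using E0 E1 by auto
    then show ?thesis unfolding errf_eq by (simp add: power_le_one)
  qed
  have int_err: "integrable (measure_pmf (D_dist mu0 Tr q g Psi h)) errf"
    by (rule measure_pmf.integrable_const_bound[where B=1]) (use errf01 in auto)
  have D0: "0 \<le> \<Delta>"
  proof -
    have "0 \<le> measure_pmf.expectation (D_dist mu0 Tr q g Psi h) errf"
      by (rule integral_nonneg_AE) (use errf01 in auto)
    then show ?thesis using err unfolding errf_def by simp
  qed
  have err_nn: "(\<integral>\<^sup>+z. ennreal (errf z) \<partial>D_dist mu0 Tr q g Psi h) \<le> ennreal \<Delta>"
  proof -
    have "(\<integral>\<^sup>+z. ennreal (errf z) \<partial>D_dist mu0 Tr q g Psi h) = ennreal (measure_pmf.expectation (D_dist mu0 Tr q g Psi h) errf)"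
      by (rule nn_integral_eq_integral[OF int_err]) (use errf01 in auto)
    also have "\<dots> \<le> ennreal \<Delta>" using err unfolding errf_def by (rule ennreal_leI)
    finally show ?thesis .
  qed
  have errB: "(\<integral>\<^sup>+z. (\<integral>\<^sup>+x. ennreal ((E z x)^2) \<partial>?Ob z) + (\<integral>\<^sup>+x. ennreal ((E z x)^2) \<partial>?R) \<partial>?Dx) \<le> ennreal (2*\<Delta>)"
  proof -
    have "(\<integral>\<^sup>+z. ennreal (errf z) \<partial>D_dist mu0 Tr q g Psi h)
        = (\<integral>\<^sup>+z. (\<lambda>x a x'. ennreal ((E (x, a) x')^2)) (fst z) (fst (snd z)) (fst (snd (snd z))) \<partial>D_dist mu0 Tr q g Psi h)"
      by (simp add: errf_eq)
    also have "\<dots> = (\<integral>\<^sup>+z. (\<integral>\<^sup>+x. ennreal ((E z x)^2) \<partial>?Ob z) \<partial>?Dx) / 2 + (\<integral>\<^sup>+z. (\<integral>\<^sup>+x. ennreal ((E z x)^2) \<partial>?R) \<partial>?Dx) / 2"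
      by (subst D_dist_marg) simp
    finally have "(\<integral>\<^sup>+z. (\<integral>\<^sup>+x. ennreal ((E z x)^2) \<partial>?Ob z) \<partial>?Dx) / 2 + (\<integral>\<^sup>+z. (\<integral>\<^sup>+x. ennreal ((E z x)^2) \<partial>?R) \<partial>?Dx) / 2 \<le> ennreal \<Delta>"
      using err_nn by simp
    from half_sum_le[OF this D0] show ?thesis by (simp add: pmf_nn_add)
  qed
  have rspos: "0 < ?rs (g x)" if "x \<in> set_pmf ?R" for x
  proof -
    have "pmf ?R x \<noteq> 0" using that by (simp add: set_pmf_eq)
    then have "?rs (g x) \<noteq> 0" using rho_pmf[OF dec, of mu0 Tr Psi h x] by auto
    then show ?thesis using rs0[of "g x"] by simp
  qed
  have Wb: "W z x1 x2 \<le> indicator S x1 * indicator S x2 * (E z x1 + E z x2) * (1 + P z x1) * (1 + P z x2)"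
    if "z \<in> set_pmf ?Dx" "x1 \<in> set_pmf ?R" "x2 \<in> set_pmf ?R" for z x1 x2
  proof (cases "phiB x1 = i \<and> phiB x2 = i")
    case True
    have "\<bar>V_fun mu0 Tr q g Psi h x1 x2 (fst z) (snd z)\<bar> \<le> (E z x1 + E z x2) * (1 + P z x1) * (1 + P z x2)"
      unfolding V_fun_def E_def P_def f_star_def True[THEN conjunct1] True[THEN conjunct2]
      by (rule valg) (auto intro: rspos that)
    then show ?thesis using True unfolding W_def S_def by simp
  next
    case False
    then show ?thesis unfolding W_def S_def by (auto simp: indicator_def)
  qed
  have bound: "measure_pmf.expectation (D_coup mu0 Tr q g Psi h)
           (\<lambda>(x, a, x1', x2'). (if phiB x1' = i \<and> phiB x2' = i then 1 else 0)
                               * \<bar>V_fun mu0 Tr q g Psi h x1' x2' x a\<bar>)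
         \<le> 2 * l * \<Delta> + 8 * measure_pmf.prob ?R S / l" if l: "0 < l" for l
  proof -
    let ?f = "\<lambda>(x, a, x1', x2'). (if phiB x1' = i \<and> phiB x2' = i then 1 else 0)
                               * \<bar>V_fun mu0 Tr q g Psi h x1' x2' x a\<bar>"
    have nn: "(\<integral>\<^sup>+z. ennreal (?f z) \<partial>D_coup mu0 Tr q g Psi h) = (\<integral>\<^sup>+z. (\<integral>\<^sup>+x1. (\<integral>\<^sup>+x2. ennreal (W z x1 x2) \<partial>?R) \<partial>?R) \<partial>?Dx)"
      unfolding D_coup_def W_def by (simp add: case_prod_unfold)
    have "measure_pmf.expectation (D_coup mu0 Tr q g Psi h) ?f = enn2real (\<integral>\<^sup>+z. ennreal (?f z) \<partial>D_coup mu0 Tr q g Psi h)"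
      by (rule integral_eq_nn_integral) (auto simp: case_prod_unfold)
    also have "\<dots> \<le> 2 * l * \<Delta> + 8 * measure_pmf.prob ?R S / l"
      unfolding nn
      by (rule enn2real_leI, use l D0 in simp, rule core[OF P0 E0 CM Rb errB Wb l D0]) auto
    finally show ?thesis .
  qed
  have b0: "0 \<le> measure_pmf.prob ?R S" by simp
  show ?thesis using final_real[OF bound b0 D0] unfolding S_def .
qed

end
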